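(* Let $\theta=\theta^je_j\in su(N)$ be a dependent variable of $x^1,x^2$, and let $\vec w_C=(f(x^1)\theta^j_1+g(x^2)\theta^j_2)\partial/\partial\theta^j$ be the generalized vector field associated with a conformal transformation. Then for every integer $k\ge0$ (wherever the iterated projectors are defined), $$\mathrm{pr}\,\vec w_C\big(\Pi_\pm^k(\mathcal E-i\theta)\big)=fD_1\Pi_\pm^k(\mathcal E-i\theta)+gD_2\Pi_\pm^k(\mathcal E-i\theta).$$ That is, the infinitesimal deformation $\theta'=\theta+\epsilon(f\theta_1+g\theta_2)$ induces the infinitesimal deformation $\big(\Pi_\pm^k(\mathcal E-i\theta)\big)'=\Pi_\pm^k(\mathcal E-i\theta)+\epsilon\big(fD_1\Pi_\pm^k(\mathcal E-i\theta)+gD_2\Pi_\pm^k(\mathcal E-i\theta)\big)$.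
   Context: $\mathcal E=\mathbb I/N$; $e_j$ is a basis of $su(N)$; $x^1=\xi$, $x^2=\bar\xi$ (Euclidean setting of the $\mathbb CP^{N-1}$ sigma model); $D_1,D_2$ are total derivatives in $x^1,x^2$; $\theta^j_J$ are jet coordinates. The raising and lowering operators on a matrix function $P$ are $$\Pi_+P=\frac{D_1P\,P\,D_2P}{\mathrm{tr}(D_1P\,P\,D_2P)},\qquad \Pi_-P=\frac{D_2P\,P\,D_1P}{\mathrm{tr}(D_2P\,P\,D_1P)},$$ and $\Pi_\pm^k$ denotes the $k$-fold iterate ($\Pi_\pm^0$ the identity); thus $\Pi_\pm^k(\mathcal E-i\theta)$ is a matrix-valued function of the jets of $\theta$. The prolongation is $\mathrm{pr}\,\vec w_C=\sum_J D_J(f\theta^j_1+g\theta^j_2)\,\partial/\partial\theta^j_J$. *)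

theory Defs
  imports "HOL-Analysis.Analysis"
begin

type_synonym 'n cmat = "complex^'n^'n"

definition cscale :: "complex \<Rightarrow> 'n::finite cmat \<Rightarrow> 'n cmat" where
  "cscale c M = (\<chi> i j. c * M$i$j)"

definition cadj :: "'n::finite cmat \<Rightarrow> 'n cmat" where
  "cadj M = (\<chi> i j. cnj (M$j$i))"

definition su :: "'n::finite cmat set" where
  "su = {A. cadj A = - A \<and> trace A = 0}"

definition Emat :: "'n::finite cmat" where
  "Emat = cscale (1 / of_nat CARD('n)) (mat 1)"

definition pd1 :: "(real \<times> real \<Rightarrow> 'a::real_normed_vector) \<Rightarrow> real \<times> real \<Rightarrow> 'a" where
  "pd1 P x = vector_derivative (\<lambda>t. P (t, snd x)) (at (fst x))"

definition pd2 :: "(real \<times> real \<Rightarrow> 'a::real_normed_vector) \<Rightarrow> real \<times> real \<Rightarrow> 'a" where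
  "pd2 P x = vector_derivative (\<lambda>t. P (fst x, t)) (at (snd x))"

fun iter_pd :: "bool list \<Rightarrow> (real \<times> real \<Rightarrow> 'a::real_normed_vector) \<Rightarrow> real \<times> real \<Rightarrow> 'a" where
  "iter_pd [] P = P"
| "iter_pd (b # bs) P = (if b then pd1 else pd2) (iter_pd bs P)"

definition smooth2 :: "(real \<times> real \<Rightarrow> 'a::real_normed_vector) \<Rightarrow> bool" where
  "smooth2 P \<longleftrightarrow> (\<forall>bs x. iter_pd bs P differentiable (at x))"

definition iter_vd :: "nat \<Rightarrow> (real \<Rightarrow> 'a::real_normed_vector) \<Rightarrow> real \<Rightarrow> 'a" where
  "iter_vd n f = ((\<lambda>h t. vector_derivative h (at t)) ^^ n) f"

definition smooth1 :: "(real \<Rightarrow> 'a::real_normed_vector) \<Rightarrow> bool" where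
  "smooth1 f \<longleftrightarrow> (\<forall>n t. iter_vd n f differentiable (at t))"

text \<open>Raising (s = True, Pi_+) and lowering (s = False, Pi_-) operators.
  denom s P x is the trace in the denominator; division by 0 gives 0 in HOL,
  definedness is imposed separately by requiring nonzero denominators.\<close>
definition numer :: "bool \<Rightarrow> (real \<times> real \<Rightarrow> 'n::finite cmat) \<Rightarrow> real \<times> real \<Rightarrow> 'n cmat" where
  "numer s P x = (if s then pd1 P x ** P x ** pd2 P x else pd2 P x ** P x ** pd1 P x)"

definition denom :: "bool \<Rightarrow> (real \<times> real \<Rightarrow> 'n::finite cmat) \<Rightarrow> real \<times> real \<Rightarrow> complex" where
  "denom s P x = trace (numer s P x)"

definition Pi_op :: "bool \<Rightarrow> (real \<times> real \<Rightarrow> 'n::finite cmat) \<Rightarrow> real \<times> real \<Rightarrow> 'n cmat" where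
  "Pi_op s P x = cscale (inverse (denom s P x)) (numer s P x)"

end

theory Submission
  imports Defs
begin

lemma vec_hvd:
  fixes f :: "real \<Rightarrow> 'a::real_normed_vector^'n"
  assumes "\<And>i. ((\<lambda>t. f t $ i) has_vector_derivative (d $ i)) (at t)"
  shows "(f has_vector_derivative d) (at t)"
proof -
  have "((\<lambda>y. ((f y - f t) - (y - t) *\<^sub>R d) /\<^sub>R norm (y - t)) \<longlongrightarrow> 0) (at t)"
  proof (rule vec_tendstoI)
    fix i
    from assms[of i] have "((\<lambda>y. ((f y $ i - f t $ i) - (y - t) *\<^sub>R d $ i) /\<^sub>R norm (y - t)) \<longlongrightarrow> 0) (at t)"
      unfolding has_vector_derivative_def has_derivative_at_within by simp
    then show "((\<lambda>y. (((f y - f t) - (y - t) *\<^sub>R d) /\<^sub>R norm (y - t)) $ i) \<longlongrightarrow> 0 $ i) (at t)"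
      by simp
  qed
  then show ?thesis unfolding has_vector_derivative_def has_derivative_at_within
    by (simp add: bounded_linear_scaleR_left)
qed

type_synonym pt = "real \<times> (real \<times> real)"

definition D :: "pt \<Rightarrow> (pt \<Rightarrow> complex) \<Rightarrow> pt \<Rightarrow> complex" where
  "D v F p = frechet_derivative F (at p) v"

coinductive Sm :: "pt set \<Rightarrow> (pt \<Rightarrow> complex) \<Rightarrow> bool" for S where
  SmI: "(\<forall>p\<in>S. F differentiable (at p)) \<Longrightarrow> (\<forall>v. Sm S (D v F)) \<Longrightarrow> Sm S F"

inductive A :: "pt set \<Rightarrow> (pt \<Rightarrow> complex) set \<Rightarrow> (pt \<Rightarrow> complex) \<Rightarrow> bool" for S Gen where
  gen: "F \<in> Gen \<Longrightarrow> A S Gen F"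
| sm: "Sm S F \<Longrightarrow> A S Gen F"
| add: "A S Gen F \<Longrightarrow> A S Gen G \<Longrightarrow> A S Gen (\<lambda>p. F p + G p)"
| mult: "A S Gen F \<Longrightarrow> A S Gen G \<Longrightarrow> A S Gen (\<lambda>p. F p * G p)"
| inv: "A S Gen h \<Longrightarrow> (\<forall>p\<in>S. h p \<noteq> 0) \<Longrightarrow> A S Gen (\<lambda>p. inverse (h p))"
| cong: "A S Gen F \<Longrightarrow> (\<forall>p\<in>S. G p = F p) \<Longrightarrow> A S Gen G"

lemma D_hd: "(F has_derivative F') (at p) \<Longrightarrow> D v F p = F' v"
  unfolding D_def using frechet_derivative_at by metis

lemma D_works: "F differentiable (at p) \<Longrightarrow> (F has_derivative (\<lambda>v. D v F p)) (at p)"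
  unfolding D_def using frechet_derivative_works by (metis eta_contract_eq)

lemma D_add: "F differentiable (at p) \<Longrightarrow> G differentiable (at p) \<Longrightarrow>
   D v (\<lambda>q. F q + G q) p = D v F p + D v G p"
  by (rule D_hd, intro has_derivative_add D_works)

lemma D_mult: "F differentiable (at p) \<Longrightarrow> G differentiable (at p) \<Longrightarrow>
   D v (\<lambda>q. F q * G q) p = F p * D v G p + D v F p * G p"
  by (rule D_hd, intro has_derivative_mult D_works)

lemma D_inv: "F differentiable (at p) \<Longrightarrow> F p \<noteq> 0 \<Longrightarrow>
   D v (\<lambda>q. inverse (F q)) p = - (inverse (F p) * D v F p * inverse (F p))"
proof -
  assume a: "F differentiable (at p)" "F p \<noteq> 0"
  have "((\<lambda>q. inverse (F q)) has_derivative (\<lambda>h. - (inverse (F p) * D h F p * inverse (F p)))) (at p)"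
    by (rule Deriv.has_derivative_inverse) (use a D_works in auto)
  from D_hd[OF this] show ?thesis .
qed

lemma D_const[simp]: "D v (\<lambda>q. c) = (\<lambda>q. 0)"
  unfolding D_def by (rule ext) simp

lemma D_cong: "open S \<Longrightarrow> p \<in> S \<Longrightarrow> \<forall>q\<in>S. G q = F q \<Longrightarrow> F differentiable (at p) \<Longrightarrow>
   D v G p = D v F p"
  by (rule D_hd, rule has_derivative_transform_within_open[OF D_works]) auto

lemma diff_cong: "open S \<Longrightarrow> p \<in> S \<Longrightarrow> \<forall>q\<in>S. G q = F q \<Longrightarrow> F differentiable (at p) \<Longrightarrow>
   G differentiable (at p)"
  unfolding differentiable_def
  by (metis has_derivative_transform_within_open)

lemma A_diff:
  assumes "open S" "\<forall>F\<in>Gen. \<forall>p\<in>S. F differentiable (at p)"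
  shows "A S Gen F \<Longrightarrow> p \<in> S \<Longrightarrow> F differentiable (at p)"
proof (induction arbitrary: p rule: A.induct)
  case (gen F) then show ?case using assms by blast
next
  case (sm F) then show ?case by (auto elim: Sm.cases)
next
  case (add F G) then show ?case by (auto intro: differentiable_add)
next
  case (mult F G) then show ?case by (auto intro: differentiable_mult)
next
  case (inv h)
  then obtain h' where "(h has_derivative h') (at p)" unfolding differentiable_def by blast
  from Deriv.has_derivative_inverse[OF _ this] inv show ?case unfolding differentiable_def by blast
next
  case (cong F G) then show ?case using diff_cong[OF assms(1)] by blast
qed

lemma Sm_const: "Sm S (\<lambda>p. c)"
proof -
  have "\<exists>c. F = (\<lambda>p. c) \<Longrightarrow> Sm S F" for F
    by (coinduction arbitrary: F) auto
  then show ?thesis by blast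
qed

lemma A_D:
  assumes "open S" "\<forall>F\<in>Gen. \<forall>p\<in>S. F differentiable (at p)"
    "\<forall>F\<in>Gen. \<forall>v. A S Gen (D v F)"
  shows "A S Gen F \<Longrightarrow> A S Gen (D v F)"
proof (induction rule: A.induct)
  case (gen F) then show ?case using assms by blast
next
  case (sm F) then show ?case by (auto elim: Sm.cases intro: A.sm)
next
  case (add F G)
  have "A S Gen (\<lambda>p. D v F p + D v G p)" using add by (intro A.add)
  then show ?case
    by (rule A.cong) (auto intro!: D_add A_diff[OF assms(1,2)] add)
next
  case (mult F G)
  have "A S Gen (\<lambda>p. F p * D v G p + D v F p * G p)" using mult by (intro A.add A.mult)
  then show ?case
    by (rule A.cong) (auto intro!: D_mult A_diff[OF assms(1,2)] mult)
next
  case (inv h)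
  have "A S Gen (\<lambda>p. (-1) * (inverse (h p) * D v h p * inverse (h p)))"
    by (rule A.mult[OF A.sm[OF Sm_const]], rule A.mult[OF A.mult], rule A.inv)
       (use inv in \<open>auto intro: A.inv\<close>)
  then show ?case
    by (rule A.cong) (use inv(2) in \<open>auto intro!: D_inv A_diff[OF assms(1,2)] inv\<close>)
next
  case (cong F G)
  then show ?case
    by (intro A.cong[OF cong(3)]) (auto intro!: D_cong[OF assms(1)] A_diff[OF assms(1,2)])
qed

lemma A_Sm:
  assumes "open S" "\<forall>F\<in>Gen. \<forall>p\<in>S. F differentiable (at p)"
    "\<forall>F\<in>Gen. \<forall>v. A S Gen (D v F)"
  shows "A S Gen F \<Longrightarrow> Sm S F"
proof (coinduction arbitrary: F)
  case (Sm F)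
  then show ?case using A_diff[OF assms(1,2)] A_D[OF assms] by blast
qed

lemma Sm_diff: "Sm S F \<Longrightarrow> p \<in> S \<Longrightarrow> F differentiable (at p)"
  by (auto elim: Sm.cases)

lemma Sm_D: "Sm S F \<Longrightarrow> Sm S (D v F)"
  by (auto elim: Sm.cases)

lemma Sm_A: "open S \<Longrightarrow> A S {} F \<Longrightarrow> Sm S F"
  by (rule A_Sm) auto

lemma Sm_add: "open S \<Longrightarrow> Sm S F \<Longrightarrow> Sm S G \<Longrightarrow> Sm S (\<lambda>p. F p + G p)"
  by (rule Sm_A, assumption, intro A.add A.sm)

lemma Sm_mult: "open S \<Longrightarrow> Sm S F \<Longrightarrow> Sm S G \<Longrightarrow> Sm S (\<lambda>p. F p * G p)"
  by (rule Sm_A, assumption, intro A.mult A.sm)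

lemma Sm_inv: "open S \<Longrightarrow> Sm S F \<Longrightarrow> \<forall>p\<in>S. F p \<noteq> 0 \<Longrightarrow> Sm S (\<lambda>p. inverse (F p))"
  by (rule Sm_A, assumption, intro A.inv A.sm)

lemma Sm_cong: "open S \<Longrightarrow> Sm S F \<Longrightarrow> \<forall>p\<in>S. G p = F p \<Longrightarrow> Sm S G"
  by (rule Sm_A, assumption, rule A.cong[OF A.sm])

lemma Sm_cmult: "open S \<Longrightarrow> Sm S F \<Longrightarrow> Sm S (\<lambda>p. c * F p)"
  by (rule Sm_mult, assumption, rule Sm_const)

lemma Sm_minus: "open S \<Longrightarrow> Sm S F \<Longrightarrow> Sm S (\<lambda>p. - F p)"
  using Sm_cmult[of S F "-1"] by simp

lemma Sm_diff2: "open S \<Longrightarrow> Sm S F \<Longrightarrow> Sm S G \<Longrightarrow> Sm S (\<lambda>p. F p - G p)"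
  using Sm_add[of S F "\<lambda>p. - G p"] Sm_minus[of S G] by simp

lemma Sm_sum: assumes "open S" shows "finite I \<Longrightarrow> (\<And>i. i \<in> I \<Longrightarrow> Sm S (F i)) \<Longrightarrow> Sm S (\<lambda>p. \<Sum>i\<in>I. F i p)"
proof (induction I rule: finite_induct)
  case empty then show ?case by (simp add: Sm_const)
next
  case (insert x I) then show ?case by (simp add: Sm_add assms)
qed

lemma Sm_mono: "Sm S F \<Longrightarrow> S' \<subseteq> S \<Longrightarrow> Sm S' F"
proof (coinduction arbitrary: F)
  case (Sm F) then show ?case by (auto elim: Sm.cases)
qed

lemma D_scale: "F differentiable (at p) \<Longrightarrow> D (c *\<^sub>R v) F p = c *\<^sub>R D v F p"
  unfolding D_def using linear_frechet_derivative linear_scale by blast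

lemma D_lin: "F differentiable (at p) \<Longrightarrow> D (u + v) F p = D u F p + D v F p"
  unfolding D_def using linear_frechet_derivative linear_add by blast

lemma line_hvd:
  assumes "F differentiable (at (q + t *\<^sub>R v))"
  shows "((\<lambda>t. F (q + t *\<^sub>R v)) has_vector_derivative D v F (q + t *\<^sub>R v)) (at t)"
proof -
  have l: "((\<lambda>t. q + t *\<^sub>R v) has_derivative (\<lambda>h. h *\<^sub>R v)) (at t)"
    by (auto intro!: derivative_eq_intros)
  have "((\<lambda>t. F (q + t *\<^sub>R v)) has_derivative (\<lambda>h. D (h *\<^sub>R v) F (q + t *\<^sub>R v))) (at t)"
    using has_derivative_compose[OF l D_works[OF assms]] by (simp add: o_def)
  then show ?thesis unfolding has_vector_derivative_def
    using D_scale[OF assms] by simp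
qed

lemma mvi:
  fixes \<phi> :: "real \<Rightarrow> complex"
  assumes "\<And>t. t \<in> closed_segment 0 h \<Longrightarrow> (\<phi> has_vector_derivative \<phi>' t) (at t)"
    and "\<And>t. t \<in> closed_segment 0 h \<Longrightarrow> norm (\<phi>' t - c) \<le> B"
  shows "norm (\<phi> h - \<phi> 0 - h *\<^sub>R c) \<le> B * \<bar>h\<bar>"
proof -
  have "norm ((\<phi> h - h *\<^sub>R c) - (\<phi> 0 - 0 *\<^sub>R c)) \<le> B * norm (h - 0)"
  proof (rule differentiable_bound[where f' = "\<lambda>t x. x *\<^sub>R (\<phi>' t - c)" and S = "closed_segment 0 h"])
    show "convex (closed_segment 0 h)" by simp
    fix x assume x: "x \<in> closed_segment 0 h"
    have "((\<lambda>t. \<phi> t - t *\<^sub>R c) has_derivative (\<lambda>y. y *\<^sub>R (\<phi>' x - c))) (at x)"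
      using assms(1)[OF x] unfolding has_vector_derivative_def
      by (auto intro!: derivative_eq_intros simp: algebra_simps)
    then show "((\<lambda>t. \<phi> t - t *\<^sub>R c) has_derivative (\<lambda>y. y *\<^sub>R (\<phi>' x - c))) (at x within closed_segment 0 h)"
      by (rule has_derivative_at_withinI)
    have "onorm (\<lambda>y::real. y *\<^sub>R (\<phi>' x - c)) = onorm (\<lambda>y::real. y) * norm (\<phi>' x - c)"
      by (rule onorm_scaleR_left) (rule bounded_linear_ident)
    also have "onorm (\<lambda>y::real. y) = 1"
      using onorm_id by (metis id_def)
    finally show "onorm (\<lambda>y::real. y *\<^sub>R (\<phi>' x - c)) \<le> B" using assms(2)[OF x] by simp
  qed auto
  then show ?thesis by (simp add: algebra_simps)
qed

lemma schwarz_aux: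
  assumes S: "open S" "p \<in> S" and F: "Sm S F" and e: "e > 0"
  shows "\<exists>d>0. \<forall>h. \<bar>h\<bar> < d \<longrightarrow>
    norm (F (p + h *\<^sub>R (u + v)) - F (p + h *\<^sub>R u) - F (p + h *\<^sub>R v) + F p
          - (h * h) *\<^sub>R D v (D u F) p) \<le> e * (h * h)"
proof -
  define G where "G = D u F"
  define C where "C = D v G p"
  have G: "Sm S G" unfolding G_def using F by (rule Sm_D)
  have H: "Sm S (D v G)" using G by (rule Sm_D)
  have "continuous (at p) (D v G)"
    using Sm_diff[OF H S(2)] by (rule differentiable_imp_continuous_within)
  then obtain \<delta> where \<delta>: "\<delta> > 0" "\<And>q. dist q p < \<delta> \<Longrightarrow> dist (D v G q) C < e"
    unfolding continuous_at_eps_delta C_def using e by blast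
  obtain r where r: "r > 0" "ball p r \<subseteq> S" using S openE by blast
  define d where "d = min r \<delta> / (norm u + norm v + 1)"
  have npos: "norm u + norm v + 1 > 0" by (smt (verit) norm_ge_zero)
  have dpos: "d > 0" unfolding d_def using r \<delta> npos by (intro divide_pos_pos) auto
  have close: "dist (p + s *\<^sub>R u + t *\<^sub>R v) p < min r \<delta>"
    if "\<bar>s\<bar> \<le> \<bar>h\<bar>" "\<bar>t\<bar> \<le> \<bar>h\<bar>" "\<bar>h\<bar> < d" for s t h
  proof -
    have "dist (p + s *\<^sub>R u + t *\<^sub>R v) p = norm (s *\<^sub>R u + t *\<^sub>R v)" by (simp add: dist_norm)
    also have "\<dots> \<le> \<bar>s\<bar> * norm u + \<bar>t\<bar> * norm v"
      by (metis norm_scaleR norm_triangle_ineq)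
    also have "\<dots> \<le> \<bar>h\<bar> * (norm u + norm v + 1)"
    proof -
      have "\<bar>s\<bar> * norm u \<le> \<bar>h\<bar> * norm u" "\<bar>t\<bar> * norm v \<le> \<bar>h\<bar> * norm v"
        using that by (auto intro: mult_right_mono)
      then show ?thesis using abs_ge_zero[of h] by (simp add: distrib_left)
    qed
    also have "\<dots> < d * (norm u + norm v + 1)"
      using that npos by (intro mult_strict_right_mono) auto
    also have "\<dots> = min r \<delta>" unfolding d_def using npos by (auto simp: field_simps)
    finally show ?thesis .
  qed
  have inS: "p + s *\<^sub>R u + t *\<^sub>R v \<in> S"
    if "\<bar>s\<bar> \<le> \<bar>h\<bar>" "\<bar>t\<bar> \<le> \<bar>h\<bar>" "\<bar>h\<bar> < d" for s t h
  proof -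
    have "p + s *\<^sub>R u + t *\<^sub>R v \<in> ball p r" using close[OF that] by (simp add: dist_commute)
    then show ?thesis using r(2) by blast
  qed
  have near: "norm (D v G (p + s *\<^sub>R u + t *\<^sub>R v) - C) \<le> e"
    if "\<bar>s\<bar> \<le> \<bar>h\<bar>" "\<bar>t\<bar> \<le> \<bar>h\<bar>" "\<bar>h\<bar> < d" for s t h
    using \<delta>(2)[of "p + s *\<^sub>R u + t *\<^sub>R v"] close[OF that] by (simp add: dist_norm)
  have seg: "\<bar>t\<bar> \<le> \<bar>h\<bar>" if "t \<in> closed_segment 0 h" for t h :: real
    using that by (auto simp: closed_segment_eq_real_ivl split: if_splits)
  show ?thesis
  proof (intro exI[of _ d] conjI allI impI dpos)
    fix h :: real assume h: "\<bar>h\<bar> < d"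
    have step1: "norm (G ((p + s *\<^sub>R u) + h *\<^sub>R v) - G ((p + s *\<^sub>R u) + 0 *\<^sub>R v) - h *\<^sub>R C) \<le> e * \<bar>h\<bar>"
      if s: "\<bar>s\<bar> \<le> \<bar>h\<bar>" for s
    proof (rule mvi)
      fix t assume t: "t \<in> closed_segment 0 h"
      have "p + s *\<^sub>R u + t *\<^sub>R v \<in> S" using inS[OF s seg[OF t] h] .
      then show "((\<lambda>t. G ((p + s *\<^sub>R u) + t *\<^sub>R v)) has_vector_derivative D v G ((p + s *\<^sub>R u) + t *\<^sub>R v)) (at t)"
        by (intro line_hvd Sm_diff[OF G])
      show "norm (D v G ((p + s *\<^sub>R u) + t *\<^sub>R v) - C) \<le> e" using near[OF s seg[OF t] h] .
    qed
    have step2: "norm ((F ((p + h *\<^sub>R v) + h *\<^sub>R u) - F (p + h *\<^sub>R u)) - (F ((p + h *\<^sub>R v) + 0 *\<^sub>R u) - F (p + 0 *\<^sub>R u))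
                 - h *\<^sub>R (h *\<^sub>R C)) \<le> (e * \<bar>h\<bar>) * \<bar>h\<bar>"
    proof (rule mvi[where \<phi> = "\<lambda>s. F ((p + h *\<^sub>R v) + s *\<^sub>R u) - F (p + s *\<^sub>R u)"])
      fix s assume s: "s \<in> closed_segment 0 h"
      have a: "p + h *\<^sub>R v + s *\<^sub>R u = p + s *\<^sub>R u + h *\<^sub>R v" by (simp add: algebra_simps)
      have i1: "p + h *\<^sub>R v + s *\<^sub>R u \<in> S" unfolding a using inS[OF seg[OF s] _ h] by simp
      have i2: "p + s *\<^sub>R u \<in> S" using inS[OF seg[OF s] _ h, of 0] by simp
      show "((\<lambda>s. F ((p + h *\<^sub>R v) + s *\<^sub>R u) - F (p + s *\<^sub>R u)) has_vector_derivative
             G ((p + h *\<^sub>R v) + s *\<^sub>R u) - G (p + s *\<^sub>R u)) (at s)"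
        unfolding G_def
        by (intro has_vector_derivative_diff line_hvd Sm_diff[OF F] i1 i2)
      show "norm (G ((p + h *\<^sub>R v) + s *\<^sub>R u) - G (p + s *\<^sub>R u) - h *\<^sub>R C) \<le> e * \<bar>h\<bar>"
        using step1[OF seg[OF s]] unfolding a by simp
    qed
    have eq: "F (p + h *\<^sub>R (u + v)) - F (p + h *\<^sub>R u) - F (p + h *\<^sub>R v) + F p - (h * h) *\<^sub>R C
      = (F ((p + h *\<^sub>R v) + h *\<^sub>R u) - F (p + h *\<^sub>R u)) - (F ((p + h *\<^sub>R v) + 0 *\<^sub>R u) - F (p + 0 *\<^sub>R u))
                 - h *\<^sub>R (h *\<^sub>R C)"
      by (simp add: algebra_simps)
    have "norm (F (p + h *\<^sub>R (u + v)) - F (p + h *\<^sub>R u) - F (p + h *\<^sub>R v) + F p - (h * h) *\<^sub>R C) \<le> e * (h * h)"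
      unfolding eq using step2 by (simp add: abs_mult_self_eq mult.assoc)
    then show "norm (F (p + h *\<^sub>R (u + v)) - F (p + h *\<^sub>R u) - F (p + h *\<^sub>R v) + F p - (h * h) *\<^sub>R D v (D u F) p) \<le> e * (h * h)"
      unfolding C_def G_def .
  qed
qed

lemma schwarz:
  assumes S: "open S" "p \<in> S" and F: "Sm S F"
  shows "D v (D u F) p = D u (D v F) p"
proof -
  have ee: "norm (D v (D u F) p - D u (D v F) p) \<le> 2 * e" if e: "e > 0" for e
  proof -
    obtain d1 where d1: "d1 > 0" "\<And>h. \<bar>h\<bar> < d1 \<Longrightarrow>
      norm (F (p + h *\<^sub>R (u + v)) - F (p + h *\<^sub>R u) - F (p + h *\<^sub>R v) + F p
          - (h * h) *\<^sub>R D v (D u F) p) \<le> e * (h * h)"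
      using schwarz_aux[OF S F e, of u v] by blast
    obtain d2 where d2: "d2 > 0" "\<And>h. \<bar>h\<bar> < d2 \<Longrightarrow>
      norm (F (p + h *\<^sub>R (v + u)) - F (p + h *\<^sub>R v) - F (p + h *\<^sub>R u) + F p
          - (h * h) *\<^sub>R D u (D v F) p) \<le> e * (h * h)"
      using schwarz_aux[OF S F e, of v u] by blast
    define h where "h = min d1 d2 / 2"
    have h: "h > 0" "\<bar>h\<bar> < d1" "\<bar>h\<bar> < d2" unfolding h_def using d1 d2 by auto
    define X where "X = F (p + h *\<^sub>R (u + v)) - F (p + h *\<^sub>R u) - F (p + h *\<^sub>R v) + F p"
    have X2: "X = F (p + h *\<^sub>R (v + u)) - F (p + h *\<^sub>R v) - F (p + h *\<^sub>R u) + F p"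
      unfolding X_def by (simp add: algebra_simps)
    have n1: "norm (X - (h*h) *\<^sub>R D v (D u F) p) \<le> e * (h*h)" using d1(2)[OF h(2)] unfolding X_def .
    have n2: "norm (X - (h*h) *\<^sub>R D u (D v F) p) \<le> e * (h*h)" using d2(2)[OF h(3)] unfolding X2 .
    have "(h*h) * norm (D v (D u F) p - D u (D v F) p) = norm ((X - (h*h) *\<^sub>R D u (D v F) p) - (X - (h*h) *\<^sub>R D v (D u F) p))"
      by (simp add: algebra_simps flip: scaleR_diff_right)
    also have "\<dots> \<le> norm (X - (h*h) *\<^sub>R D u (D v F) p) + norm (X - (h*h) *\<^sub>R D v (D u F) p)"
      by (rule norm_triangle_ineq4)
    also have "\<dots> \<le> e * (h*h) + e * (h*h)" by (rule add_mono[OF n2 n1])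
    also have "\<dots> = (h*h) * (2*e)" by (simp add: algebra_simps)
    finally show ?thesis using h(1) by (simp add: mult_le_cancel_left_pos)
  qed
  have "norm (D v (D u F) p - D u (D v F) p) \<le> 0"
  proof (rule field_le_epsilon)
    fix e :: real assume "e > 0"
    then have "norm (D v (D u F) p - D u (D v F) p) \<le> 2 * (e/2)" using ee[of "e/2"] by simp
    then show "norm (D v (D u F) p - D u (D v F) p) \<le> 0 + e" by simp
  qed
  then show ?thesis by simp
qed

lemma hd_coord_real:
  fixes \<phi> :: "real \<Rightarrow> complex"
  assumes "\<phi> differentiable (at (c p))" "bounded_linear c"
  shows "((\<lambda>p. \<phi> (c p)) has_derivative (\<lambda>v. of_real (c v) * vector_derivative \<phi> (at (c p)))) (at p)"
proof -
  have "(\<phi> has_derivative (\<lambda>h. h *\<^sub>R vector_derivative \<phi> (at (c p)))) (at (c p))"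
    using assms(1) vector_derivative_works unfolding has_vector_derivative_def by blast
  from has_derivative_compose[OF bounded_linear_imp_has_derivative[OF assms(2)] this]
  show ?thesis by (simp add: o_def scaleR_conv_of_real)
qed

lemma pd_frechet:
  fixes T :: "real \<times> real \<Rightarrow> 'a::real_normed_vector"
  assumes "(T has_derivative T') (at x)"
  shows "pd1 T x = T' (1,0)" "pd2 T x = T' (0,1)"
proof -
  have lin: "linear T'" using assms has_derivative_linear by blast
  have x: "(T has_derivative T') (at (fst x, snd x))" using assms by simp
  have c1: "((\<lambda>t. (t, snd x)) has_derivative (\<lambda>h. (h, 0))) (at (fst x))"
    by (rule has_derivative_Pair[OF has_derivative_ident has_derivative_const])
  have "((\<lambda>t. T (t, snd x)) has_derivative (\<lambda>h. T' (h, 0))) (at (fst x))"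
    using has_derivative_compose[OF c1 x] .
  moreover have "(\<lambda>h. T' (h, 0)) = (\<lambda>h. h *\<^sub>R T' (1,0))"
  proof (rule ext)
    fix h show "T' (h, 0) = h *\<^sub>R T' (1,0)" using linear_scale[OF lin, of h "(1,0)"] by simp
  qed
  ultimately have "((\<lambda>t. T (t, snd x)) has_vector_derivative T' (1,0)) (at (fst x))"
    unfolding has_vector_derivative_def by metis
  then show "pd1 T x = T' (1,0)" unfolding pd1_def by (rule vector_derivative_at)
  have c2: "((\<lambda>t. (fst x, t)) has_derivative (\<lambda>h. (0, h))) (at (snd x))"
    by (rule has_derivative_Pair[OF has_derivative_const has_derivative_ident])
  have "((\<lambda>t. T (fst x, t)) has_derivative (\<lambda>h. T' (0, h))) (at (snd x))"
    using has_derivative_compose[OF c2 x] .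
  moreover have "(\<lambda>h. T' (0, h)) = (\<lambda>h. h *\<^sub>R T' (0,1))"
  proof (rule ext)
    fix h show "T' (0, h) = h *\<^sub>R T' (0,1)" using linear_scale[OF lin, of h "(0,1)"] by simp
  qed
  ultimately have "((\<lambda>t. T (fst x, t)) has_vector_derivative T' (0,1)) (at (snd x))"
    unfolding has_vector_derivative_def by metis
  then show "pd2 T x = T' (0,1)" unfolding pd2_def by (rule vector_derivative_at)
qed

lemma frechet_split:
  fixes T :: "real \<times> real \<Rightarrow> 'a::real_normed_vector"
  assumes "(T has_derivative T') (at x)"
  shows "T' w = fst w *\<^sub>R pd1 T x + snd w *\<^sub>R pd2 T x"
proof -
  have lin: "linear T'" using assms has_derivative_linear by blast
  obtain a b where w: "w = (a,b)" by (cases w)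
  have "(a,b) = a *\<^sub>R (1::real,0::real) + b *\<^sub>R (0,1)" by simp
  then have "T' w = T' (a *\<^sub>R (1,0) + b *\<^sub>R (0,1))" unfolding w by metis
  also have "\<dots> = a *\<^sub>R T' (1,0) + b *\<^sub>R T' (0,1)"
    using linear_add[OF lin] linear_scale[OF lin] by metis
  also have "\<dots> = fst w *\<^sub>R T' (1,0) + snd w *\<^sub>R T' (0,1)" unfolding w by simp
  finally show ?thesis using pd_frechet[OF assms] by simp
qed

lemma hd_Th:
  fixes \<theta> :: "real \<times> real \<Rightarrow> 'n::finite cmat"
  assumes "smooth2 \<theta>"
  shows "((\<lambda>p. iter_pd bs \<theta> (snd p) $ i $ j) has_derivative
     (\<lambda>v. of_real (fst (snd v)) * iter_pd (True#bs) \<theta> (snd p) $ i $ j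
        + of_real (snd (snd v)) * iter_pd (False#bs) \<theta> (snd p) $ i $ j)) (at p)"
proof -
  let ?T = "iter_pd bs \<theta>"
  have "?T differentiable (at (snd p))" using assms unfolding smooth2_def by blast
  then have T: "(?T has_derivative frechet_derivative ?T (at (snd p))) (at (snd p))"
    using frechet_derivative_works by blast
  have "((\<lambda>p. ?T (snd p)) has_derivative (\<lambda>v. frechet_derivative ?T (at (snd p)) (snd v))) (at p)"
    using has_derivative_compose[OF has_derivative_snd[OF has_derivative_ident] T] by (simp add: o_def)
  then have "((\<lambda>p. ?T (snd p) $ i $ j) has_derivative (\<lambda>v. frechet_derivative ?T (at (snd p)) (snd v) $ i $ j)) (at p)"
    by (rule bounded_linear.has_derivative[OF bounded_linear_vec_nth
          bounded_linear.has_derivative[OF bounded_linear_vec_nth]])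
  then show ?thesis
    by (simp only: frechet_split[OF T] vector_add_component vector_scaleR_component iter_pd.simps if_True if_False)
       (simp add: scaleR_conv_of_real)
qed

lemma hd_vd:
  fixes f :: "real \<Rightarrow> complex"
  assumes "smooth1 f" "bounded_linear c"
  shows "((\<lambda>p. iter_vd n f (c p)) has_derivative (\<lambda>v. of_real (c v) * iter_vd (Suc n) f (c p))) (at p)"
proof -
  have "iter_vd n f differentiable (at (c p))" using assms unfolding smooth1_def by blast
  from hd_coord_real[OF this assms(2)] show ?thesis
    unfolding iter_vd_def by simp
qed

lemma hd_eps: "((\<lambda>p::pt. complex_of_real (fst p)) has_derivative (\<lambda>v. of_real (fst v))) (at p)"
  by (auto intro!: derivative_eq_intros)

definition Gen :: "(real \<times> real \<Rightarrow> 'n::finite cmat) \<Rightarrow> (real \<Rightarrow> complex) \<Rightarrow> (real \<Rightarrow> complex) \<Rightarrow> (pt \<Rightarrow> complex) set" where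
  "Gen \<theta> f g = range (\<lambda>(bs,i,j). \<lambda>p. iter_pd bs \<theta> (snd p) $ i $ j)
     \<union> range (\<lambda>n p. iter_vd n f (fst (snd p))) \<union> range (\<lambda>n p. iter_vd n g (snd (snd p)))
     \<union> {\<lambda>p. of_real (fst p)}"

lemma Gen_cases:
  assumes "F \<in> Gen \<theta> f g"
  obtains (T) bs i j where "F = (\<lambda>p. iter_pd bs \<theta> (snd p) $ i $ j)"
      | (f) n where "F = (\<lambda>p. iter_vd n f (fst (snd p)))"
      | (g) n where "F = (\<lambda>p. iter_vd n g (snd (snd p)))"
      | (e) "F = (\<lambda>p. of_real (fst p))"
  using assms unfolding Gen_def
proof (elim UnE rangeE singletonE)
  fix x assume "F = (case x of (bs, i, j) \<Rightarrow> \<lambda>p. iter_pd bs \<theta> (snd p) $ i $ j)"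
    and T: "\<And>bs i j. F = (\<lambda>p. iter_pd bs \<theta> (snd p) $ i $ j) \<Longrightarrow> thesis"
  then show thesis by (cases x) auto
qed auto

lemma Gen_T: "(\<lambda>p. iter_pd bs \<theta> (snd p) $ i $ j) \<in> Gen \<theta> f g"
  unfolding Gen_def by (intro UnI1 image_eqI[where x="(bs,i,j)"]) auto
lemma Gen_f: "(\<lambda>p. iter_vd n f (fst (snd p))) \<in> Gen \<theta> f g"
  unfolding Gen_def by (intro UnI1 UnI2 rangeI)
lemma Gen_g: "(\<lambda>p. iter_vd n g (snd (snd p))) \<in> Gen \<theta> f g"
  unfolding Gen_def by (intro UnI1 UnI2 rangeI)
lemma Gen_e: "(\<lambda>p. complex_of_real (fst p)) \<in> Gen \<theta> f g"
  unfolding Gen_def by simp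

lemma bl_x1: "bounded_linear (\<lambda>p::pt. fst (snd p))"
  by (intro bounded_linear_compose[OF bounded_linear_fst] bounded_linear_snd)
lemma bl_x2: "bounded_linear (\<lambda>p::pt. snd (snd p))"
  by (intro bounded_linear_compose[OF bounded_linear_snd] bounded_linear_snd)

lemma Gen_Sm:
  assumes "smooth2 \<theta>" "smooth1 f" "smooth1 g" "F \<in> Gen \<theta> f g"
  shows "Sm UNIV F"
proof -
  let ?G = "Gen \<theta> f g"
  have "A UNIV ?G F" using assms(4) by (rule A.gen)
  moreover have "\<forall>F\<in>?G. \<forall>p\<in>UNIV. F differentiable (at p)"
  proof (intro ballI)
    fix F p assume "F \<in> ?G"
    then consider (T) bs i j where "F = (\<lambda>p. iter_pd bs \<theta> (snd p) $ i $ j)"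
      | (f) n where "F = (\<lambda>p. iter_vd n f (fst (snd p)))"
      | (g) n where "F = (\<lambda>p. iter_vd n g (snd (snd p)))"
      | (e) "F = (\<lambda>p. of_real (fst p))" by (rule Gen_cases)
    then show "F differentiable (at p)"
    proof cases
      case T then show ?thesis using hd_Th[OF assms(1)] unfolding differentiable_def by blast
    next
      case f then show ?thesis using hd_vd[OF assms(2) bl_x1] unfolding differentiable_def by blast
    next
      case g then show ?thesis using hd_vd[OF assms(3) bl_x2] unfolding differentiable_def by blast
    next
      case e then show ?thesis using hd_eps unfolding differentiable_def by blast
    qed
  qed
  moreover have "\<forall>F\<in>?G. \<forall>v. A UNIV ?G (D v F)"
  proof (intro ballI allI)
    fix F v assume F: "F \<in> ?G"
    have cst: "A UNIV ?G (\<lambda>p. c)" for c by (rule A.sm, rule Sm_const)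
    have gg: "H \<in> ?G \<Longrightarrow> A UNIV ?G H" for H by (rule A.gen)
    from F consider (T) bs i j where "F = (\<lambda>p. iter_pd bs \<theta> (snd p) $ i $ j)"
      | (f) n where "F = (\<lambda>p. iter_vd n f (fst (snd p)))"
      | (g) n where "F = (\<lambda>p. iter_vd n g (snd (snd p)))"
      | (e) "F = (\<lambda>p. of_real (fst p))" by (rule Gen_cases)
    then show "A UNIV ?G (D v F)"
    proof cases
      case T
      have "A UNIV ?G (\<lambda>p. of_real (fst (snd v)) * iter_pd (True#bs) \<theta> (snd p) $ i $ j
        + of_real (snd (snd v)) * iter_pd (False#bs) \<theta> (snd p) $ i $ j)"
        by (intro A.add A.mult cst gg Gen_T Gen_f Gen_g)
      then show ?thesis unfolding T D_hd[OF hd_Th[OF assms(1)]] .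
    next
      case f
      have "A UNIV ?G (\<lambda>p. of_real (fst (snd v)) * iter_vd (Suc n) f (fst (snd p)))"
        by (intro A.add A.mult cst gg Gen_T Gen_f Gen_g)
      then show ?thesis unfolding f D_hd[OF hd_vd[OF assms(2) bl_x1]] by simp
    next
      case g
      have "A UNIV ?G (\<lambda>p. of_real (snd (snd v)) * iter_vd (Suc n) g (snd (snd p)))"
        by (intro A.add A.mult cst gg Gen_T Gen_f Gen_g)
      then show ?thesis unfolding g D_hd[OF hd_vd[OF assms(3) bl_x2]] by simp
    next
      case e
      show ?thesis unfolding e D_hd[OF hd_eps] by (rule cst)
    qed
  qed
  ultimately show ?thesis using A_Sm[of UNIV ?G] by blast
qed

definition e0 :: pt where "e0 = (1,0,0)"
definition e1 :: pt where "e1 = (0,1,0)"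
definition e2 :: pt where "e2 = (0,0,1)"

definition Lop :: "(real \<Rightarrow> complex) \<Rightarrow> (real \<Rightarrow> complex) \<Rightarrow> (pt \<Rightarrow> complex) \<Rightarrow> pt \<Rightarrow> complex" where
  "Lop f g F p = D e0 F p - f (fst (snd p)) * D e1 F p - g (snd (snd p)) * D e2 F p"

lemma D_sum: "finite I \<Longrightarrow> (\<And>i. i \<in> I \<Longrightarrow> F i differentiable (at p)) \<Longrightarrow>
  D v (\<lambda>q. \<Sum>i\<in>I. F i q) p = (\<Sum>i\<in>I. D v (F i) p)"
proof -
  assume "finite I" "\<And>i. i \<in> I \<Longrightarrow> F i differentiable (at p)"
  then have "((\<lambda>q. \<Sum>i\<in>I. F i q) has_derivative (\<lambda>v. \<Sum>i\<in>I. D v (F i) p)) (at p)"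
    by (intro has_derivative_sum D_works)
  from D_hd[OF this] show ?thesis .
qed

lemma diff_sum: fixes F :: "'i \<Rightarrow> pt \<Rightarrow> complex" shows "finite I \<Longrightarrow> (\<And>i. i \<in> I \<Longrightarrow> F i differentiable (at p)) \<Longrightarrow>
  (\<lambda>q. \<Sum>i\<in>I. F i q) differentiable (at p)"
proof -
  assume "finite I" "\<And>i. i \<in> I \<Longrightarrow> F i differentiable (at p)"
  then have "((\<lambda>q. \<Sum>i\<in>I. F i q) has_derivative (\<lambda>v. \<Sum>i\<in>I. D v (F i) p)) (at p)"
    by (intro has_derivative_sum D_works)
  then show ?thesis unfolding differentiable_def by blast
qed

lemma Lop_add: "F differentiable (at p) \<Longrightarrow> G differentiable (at p) \<Longrightarrow>
  Lop f g (\<lambda>q. F q + G q) p = Lop f g F p + Lop f g G p"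
  unfolding Lop_def by (simp add: D_add algebra_simps)

lemma Lop_mult: "F differentiable (at p) \<Longrightarrow> G differentiable (at p) \<Longrightarrow>
  Lop f g (\<lambda>q. F q * G q) p = Lop f g F p * G p + F p * Lop f g G p"
  unfolding Lop_def by (simp add: D_mult algebra_simps)

lemma Lop_inv: "F differentiable (at p) \<Longrightarrow> F p \<noteq> 0 \<Longrightarrow>
  Lop f g (\<lambda>q. inverse (F q)) p = - (inverse (F p) * Lop f g F p * inverse (F p))"
  unfolding Lop_def by (simp add: D_inv algebra_simps)

lemma Lop_sum: "finite I \<Longrightarrow> (\<And>i. i \<in> I \<Longrightarrow> F i differentiable (at p)) \<Longrightarrow>
  Lop f g (\<lambda>q. \<Sum>i\<in>I. F i q) p = (\<Sum>i\<in>I. Lop f g (F i) p)"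
  unfolding Lop_def by (simp add: D_sum sum_subtractf sum_distrib_left)

lemma Lop_cong: "open S \<Longrightarrow> p \<in> S \<Longrightarrow> \<forall>q\<in>S. G q = F q \<Longrightarrow> F differentiable (at p) \<Longrightarrow>
   Lop f g G p = Lop f g F p"
  unfolding Lop_def using D_cong by metis

lemma slice_zero:
  assumes S: "open S" "p \<in> S" and p0: "fst p = 0" and H: "H differentiable (at p)"
    and Z: "\<forall>q\<in>S. fst q = 0 \<longrightarrow> H q = 0" and v0: "fst v = 0"
  shows "D v H p = 0"
proof -
  have "((\<lambda>t. H (p + t *\<^sub>R v)) has_vector_derivative D v H (p + 0 *\<^sub>R v)) (at 0)"
    by (rule line_hvd) (use H in simp)
  then have d1: "((\<lambda>t. H (p + t *\<^sub>R v)) has_vector_derivative D v H p) (at 0)" by simp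
  let ?T = "{t::real. p + t *\<^sub>R v \<in> S}"
  have "?T = (\<lambda>t. p + t *\<^sub>R v) -` S" by auto
  moreover have "open ((\<lambda>t. p + t *\<^sub>R v) -` S)"
    by (rule open_vimage[OF S(1)]) (auto intro!: continuous_intros)
  ultimately have oT: "open ?T" by simp
  have "((\<lambda>t. H (p + t *\<^sub>R v)) has_vector_derivative 0) (at 0)"
  proof (rule has_vector_derivative_transform_within_open[where f="\<lambda>t. 0" and S="?T"])
    show "((\<lambda>t. 0) has_vector_derivative 0) (at 0)" by (rule has_vector_derivative_const)
    show "open ?T" by (rule oT)
    show "0 \<in> ?T" using S by simp
    fix t assume "t \<in> ?T"
    then show "0 = H (p + t *\<^sub>R v)" using Z p0 v0 by simp
  qed
  from vector_derivative_unique_at[OF d1 this] show ?thesis .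
qed

lemma D_diff: "F differentiable (at p) \<Longrightarrow> G differentiable (at p) \<Longrightarrow>
   D v (\<lambda>q. F q - G q) p = D v F p - D v G p"
  by (rule D_hd, intro has_derivative_diff D_works)

lemma D_fx: "smooth1 f \<Longrightarrow> D v (\<lambda>q. iter_vd n f (fst (snd q))) p = of_real (fst (snd v)) * iter_vd (Suc n) f (fst (snd p))"
  by (rule D_hd[OF hd_vd[OF _ bl_x1]])
lemma D_gx: "smooth1 g \<Longrightarrow> D v (\<lambda>q. iter_vd n g (snd (snd q))) p = of_real (snd (snd v)) * iter_vd (Suc n) g (snd (snd p))"
  by (rule D_hd[OF hd_vd[OF _ bl_x2]])

lemma iter_vd_0: "iter_vd 0 f = f" unfolding iter_vd_def by simp

lemma Lop_commute:
  assumes S: "open S" "p \<in> S" and p0: "fst p = 0" and F: "Sm S F"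
    and sf: "smooth1 f" and sg: "smooth1 g" and s2: "smooth2 (\<theta>::real \<times> real \<Rightarrow> 'n::finite cmat)"
    and Z: "\<forall>q\<in>S. fst q = 0 \<longrightarrow> Lop f g F q = 0"
  shows "Lop f g (D e1 F) p = iter_vd 1 f (fst (snd p)) * D e1 F p"
    and "Lop f g (D e2 F) p = iter_vd 1 g (snd (snd p)) * D e2 F p"
proof -
  define fx where "fx = (\<lambda>q::pt. iter_vd 0 f (fst (snd q)))"
  define gx where "gx = (\<lambda>q::pt. iter_vd 0 g (snd (snd q)))"
  have fxS: "Sm S fx" unfolding fx_def
    by (rule Sm_mono[OF Gen_Sm[OF s2 sf sg Gen_f]]) simp
  have gxS: "Sm S gx" unfolding gx_def
    by (rule Sm_mono[OF Gen_Sm[OF s2 sf sg Gen_g]]) simp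
  define H where "H = (\<lambda>q. D e0 F q - fx q * D e1 F q - gx q * D e2 F q)"
  have HL: "H q = Lop f g F q" for q unfolding H_def Lop_def fx_def gx_def iter_vd_0 ..
  have HS: "Sm S H" unfolding H_def
    by (intro Sm_diff2 Sm_mult Sm_D F fxS gxS S(1))
  have dF: "\<And>v. D v F differentiable (at p)" using Sm_diff[OF Sm_D[OF F] S(2)] .
  have dF2: "\<And>v w. D w (D v F) differentiable (at p)" using Sm_diff[OF Sm_D[OF Sm_D[OF F]] S(2)] .
  have dfx: "fx differentiable (at p)" using Sm_diff[OF fxS S(2)] .
  have dgx: "gx differentiable (at p)" using Sm_diff[OF gxS S(2)] .
  have Hz: "D v H p = 0" if "fst v = 0" for v
    by (rule slice_zero[OF S p0 Sm_diff[OF HS S(2)] _ that]) (use Z HL in auto)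
  have sw: "D a (D b F) p = D b (D a F) p" for a b using schwarz[OF S F] .
  have DH: "D v H p = D v (D e0 F) p - (fx p * D v (D e1 F) p + D v fx p * D e1 F p)
      - (gx p * D v (D e2 F) p + D v gx p * D e2 F p)" for v
  proof -
    have m1: "(\<lambda>q. fx q * D e1 F q) differentiable (at p)" using dfx dF by (rule differentiable_mult)
    have m2: "(\<lambda>q. gx q * D e2 F q) differentiable (at p)" using dgx dF by (rule differentiable_mult)
    have d1: "(\<lambda>q. D e0 F q - fx q * D e1 F q) differentiable (at p)" using dF m1 by (rule differentiable_diff)
    have "D v H p = D v (\<lambda>q. D e0 F q - fx q * D e1 F q) p - D v (\<lambda>q. gx q * D e2 F q) p"
      unfolding H_def by (rule D_diff[OF d1 m2])
    also have "D v (\<lambda>q. D e0 F q - fx q * D e1 F q) p = D v (D e0 F) p - D v (\<lambda>q. fx q * D e1 F q) p"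
      by (rule D_diff[OF dF m1])
    also have "D v (\<lambda>q. fx q * D e1 F q) p = fx p * D v (D e1 F) p + D v fx p * D e1 F p"
      by (rule D_mult[OF dfx dF])
    also have "D v (\<lambda>q. gx q * D e2 F q) p = gx p * D v (D e2 F) p + D v gx p * D e2 F p"
      by (rule D_mult[OF dgx dF])
    finally show ?thesis .
  qed
  show "Lop f g (D e1 F) p = iter_vd 1 f (fst (snd p)) * D e1 F p"
  proof -
    have "D e1 H p = 0" by (rule Hz) (simp add: e1_def)
    moreover have "D e1 fx p = iter_vd 1 f (fst (snd p))" unfolding fx_def D_fx[OF sf] by (simp add: e1_def)
    moreover have "D e1 gx p = 0" unfolding gx_def D_gx[OF sg] by (simp add: e1_def)
    ultimately show ?thesis using DH[of e1] sw[of e0 e1] sw[of e2 e1]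
      unfolding Lop_def fx_def gx_def iter_vd_0 by (simp add: algebra_simps)
  qed
  show "Lop f g (D e2 F) p = iter_vd 1 g (snd (snd p)) * D e2 F p"
  proof -
    have "D e2 H p = 0" by (rule Hz) (simp add: e2_def)
    moreover have "D e2 fx p = 0" unfolding fx_def D_fx[OF sf] by (simp add: e2_def)
    moreover have "D e2 gx p = iter_vd 1 g (snd (snd p))" unfolding gx_def D_gx[OF sg] by (simp add: e2_def)
    ultimately show ?thesis using DH[of e2] sw[of e0 e2] sw[of e1 e2]
      unfolding Lop_def fx_def gx_def iter_vd_0 by (simp add: algebra_simps)
  qed
qed

lemma R1:
  fixes Q :: "real \<Rightarrow> real \<times> real \<Rightarrow> 'n::finite cmat"
  assumes "\<And>i j. (\<lambda>p. Q (fst p) (snd p) $ i $ j) differentiable (at p)"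
  shows "pd1 (Q (fst p)) (snd p) = (\<chi> i j. D e1 (\<lambda>p. Q (fst p) (snd p) $ i $ j) p)"
    and "pd2 (Q (fst p)) (snd p) = (\<chi> i j. D e2 (\<lambda>p. Q (fst p) (snd p) $ i $ j) p)"
proof -
  obtain a b c where p: "p = (a,b,c)" by (cases p) auto
  have l1: "((\<lambda>t. Q a (t, c) $ i $ j) has_vector_derivative D e1 (\<lambda>p. Q (fst p) (snd p) $ i $ j) p) (at b)" for i j
  proof -
    have eq: "(a, 0, c) + b *\<^sub>R e1 = p" unfolding p e1_def by simp
    have "((\<lambda>t. Q (fst ((a, 0, c) + t *\<^sub>R e1)) (snd ((a, 0, c) + t *\<^sub>R e1)) $ i $ j) has_vector_derivative
       D e1 (\<lambda>p. Q (fst p) (snd p) $ i $ j) ((a, 0, c) + b *\<^sub>R e1)) (at b)"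
      by (rule line_hvd[where F="\<lambda>p. Q (fst p) (snd p) $ i $ j"]) (use assms eq in simp)
    then show ?thesis unfolding eq by (simp add: e1_def)
  qed
  have "((\<lambda>t. Q a (t, c)) has_vector_derivative (\<chi> i j. D e1 (\<lambda>p. Q (fst p) (snd p) $ i $ j) p)) (at b)"
    by (intro vec_hvd) (simp add: l1)
  then show "pd1 (Q (fst p)) (snd p) = (\<chi> i j. D e1 (\<lambda>p. Q (fst p) (snd p) $ i $ j) p)"
    unfolding pd1_def p by (simp add: vector_derivative_at)
  have l2: "((\<lambda>t. Q a (b, t) $ i $ j) has_vector_derivative D e2 (\<lambda>p. Q (fst p) (snd p) $ i $ j) p) (at c)" for i j
  proof -
    have eq: "(a, b, 0) + c *\<^sub>R e2 = p" unfolding p e2_def by simp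
    have "((\<lambda>t. Q (fst ((a, b, 0) + t *\<^sub>R e2)) (snd ((a, b, 0) + t *\<^sub>R e2)) $ i $ j) has_vector_derivative
       D e2 (\<lambda>p. Q (fst p) (snd p) $ i $ j) ((a, b, 0) + c *\<^sub>R e2)) (at c)"
      by (rule line_hvd[where F="\<lambda>p. Q (fst p) (snd p) $ i $ j"]) (use assms eq in simp)
    then show ?thesis unfolding eq by (simp add: e2_def)
  qed
  have "((\<lambda>t. Q a (b, t)) has_vector_derivative (\<chi> i j. D e2 (\<lambda>p. Q (fst p) (snd p) $ i $ j) p)) (at c)"
    by (intro vec_hvd) (simp add: l2)
  then show "pd2 (Q (fst p)) (snd p) = (\<chi> i j. D e2 (\<lambda>p. Q (fst p) (snd p) $ i $ j) p)"
    unfolding pd2_def p by (simp add: vector_derivative_at)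
qed

definition Pe :: "(real \<times> real \<Rightarrow> 'n::finite cmat) \<Rightarrow> (real \<Rightarrow> complex) \<Rightarrow> (real \<Rightarrow> complex) \<Rightarrow> real \<Rightarrow> real \<times> real \<Rightarrow> 'n cmat" where
  "Pe \<theta> f g \<epsilon> = (\<lambda>x. Emat - cscale \<i> (\<theta> x + \<epsilon> *\<^sub>R
                  (cscale (f (fst x)) (pd1 \<theta> x) + cscale (g (snd x)) (pd2 \<theta> x))))"

definition Fe :: "(real \<times> real \<Rightarrow> 'n::finite cmat) \<Rightarrow> (real \<Rightarrow> complex) \<Rightarrow> (real \<Rightarrow> complex) \<Rightarrow> bool \<Rightarrow> nat \<Rightarrow> 'n \<Rightarrow> 'n \<Rightarrow> pt \<Rightarrow> complex" where
  "Fe \<theta> f g s m i j p = (Pi_op s ^^ m) (Pe \<theta> f g (fst p)) (snd p) $ i $ j"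

definition AD :: "bool \<Rightarrow> pt" where "AD s = (if s then e1 else e2)"
definition CD :: "bool \<Rightarrow> pt" where "CD s = (if s then e2 else e1)"

definition NN where
  "NN \<theta> f g s m i j p = (\<Sum>b\<in>UNIV. (\<Sum>a\<in>UNIV. D (AD s) (Fe \<theta> f g s m i a) p * Fe \<theta> f g s m a b p) * D (CD s) (Fe \<theta> f g s m b j) p)"

definition TT where
  "TT \<theta> f g s m p = (\<Sum>i\<in>UNIV. NN \<theta> f g s m i i p)"

lemma cscale_nth[simp]: "cscale c M $ i $ j = c * M $ i $ j"
  unfolding cscale_def by simp

lemma mmult_nth: "(X ** Y) $ i $ j = (\<Sum>k\<in>UNIV. X $ i $ k * Y $ k $ j)"
  unfolding matrix_matrix_mult_def by simp

lemma Pi_entry: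
  "Pi_op s Q x $ i $ j = inverse (denom s Q x) * numer s Q x $ i $ j"
  unfolding Pi_op_def by simp

lemma step_a:
  fixes \<theta> :: "real \<times> real \<Rightarrow> 'n::finite cmat"
  assumes "\<And>i j. Fe \<theta> f g s m i j differentiable (at p)"
  shows "Fe \<theta> f g s (Suc m) i j p = inverse (TT \<theta> f g s m p) * NN \<theta> f g s m i j p"
    and "denom s ((Pi_op s ^^ m) (Pe \<theta> f g (fst p))) (snd p) = TT \<theta> f g s m p"
proof -
  let ?Q = "\<lambda>\<epsilon>. (Pi_op s ^^ m) (Pe \<theta> f g \<epsilon>)"
  have d: "\<And>i j. (\<lambda>p. ?Q (fst p) (snd p) $ i $ j) differentiable (at p)"
    using assms unfolding Fe_def .
  have fe': "(\<lambda>p. ?Q (fst p) (snd p) $ a $ b) = Fe \<theta> f g s m a b" for a b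
    by (rule ext) (simp add: Fe_def)
  note r = R1[of ?Q, OF d, unfolded fe']
  have fe: "?Q (fst p) (snd p) $ a $ b = Fe \<theta> f g s m a b p" for a b unfolding Fe_def ..
  have num: "numer s (?Q (fst p)) (snd p) $ i $ j = NN \<theta> f g s m i j p" for i j
  proof -
    have "numer s (?Q (fst p)) (snd p) $ i $ j = (if s then (pd1 (?Q (fst p)) (snd p) ** ?Q (fst p) (snd p) ** pd2 (?Q (fst p)) (snd p)) $ i $ j
        else (pd2 (?Q (fst p)) (snd p) ** ?Q (fst p) (snd p) ** pd1 (?Q (fst p)) (snd p)) $ i $ j)"
      unfolding numer_def by simp
    also have "\<dots> = NN \<theta> f g s m i j p"
      unfolding mmult_nth r vec_lambda_beta fe NN_def AD_def CD_def by simp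
    finally show ?thesis .
  qed
  show den: "denom s (?Q (fst p)) (snd p) = TT \<theta> f g s m p"
    unfolding denom_def TT_def trace_def by (simp add: num)
  show "Fe \<theta> f g s (Suc m) i j p = inverse (TT \<theta> f g s m p) * NN \<theta> f g s m i j p"
    unfolding Fe_def by (simp add: Pi_entry num[unfolded] den[symmetric] del: Pi_op_def)
qed

definition cc :: "(real \<Rightarrow> complex) \<Rightarrow> (real \<Rightarrow> complex) \<Rightarrow> pt \<Rightarrow> complex" where
  "cc f g q = iter_vd 1 f (fst (snd q)) + iter_vd 1 g (snd (snd q))"

lemma step_bc:
  fixes \<theta> :: "real \<times> real \<Rightarrow> 'n::finite cmat"
  assumes s2: "smooth2 \<theta>" and sf: "smooth1 f" and sg: "smooth1 g"
    and S: "open S" and Fs: "\<And>i j. Sm S (Fe \<theta> f g s m i j)"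
    and Z: "\<And>i j. \<forall>q\<in>S. fst q = 0 \<longrightarrow> Lop f g (Fe \<theta> f g s m i j) q = 0"
  shows "Sm S (NN \<theta> f g s m i j)" "Sm S (TT \<theta> f g s m)"
    and "q \<in> S \<Longrightarrow> fst q = 0 \<Longrightarrow> Lop f g (NN \<theta> f g s m i j) q = cc f g q * NN \<theta> f g s m i j q"
    and "q \<in> S \<Longrightarrow> fst q = 0 \<Longrightarrow> Lop f g (TT \<theta> f g s m) q = cc f g q * TT \<theta> f g s m q"
proof -
  let ?F = "Fe \<theta> f g s m"
  let ?X = "\<lambda>i b q. \<Sum>a\<in>UNIV. D (AD s) (?F i a) q * ?F a b q"
  let ?Y = "\<lambda>b j. D (CD s) (?F b j)"
  have NNe: "NN \<theta> f g s m i j = (\<lambda>q. \<Sum>b\<in>UNIV. ?X i b q * ?Y b j q)" for i j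
    unfolding NN_def by (rule ext) simp
  have TTe: "TT \<theta> f g s m = (\<lambda>q. \<Sum>i\<in>UNIV. NN \<theta> f g s m i i q)"
    unfolding TT_def by (rule ext) simp
  have XS: "Sm S (?X i b)" for i b
    by (intro Sm_sum S finite Sm_mult Sm_D Fs)
  have YS: "Sm S (?Y b j)" for b j by (intro Sm_D Fs)
  have NS: "Sm S (NN \<theta> f g s m i j)" for i j
    unfolding NNe by (intro Sm_sum S finite Sm_mult XS YS)
  then show "Sm S (NN \<theta> f g s m i j)" .
  show "Sm S (TT \<theta> f g s m)" unfolding TTe by (intro Sm_sum S finite NS)
  assume q: "q \<in> S" "fst q = 0"
  let ?ca = "if s then iter_vd 1 f (fst (snd q)) else iter_vd 1 g (snd (snd q))"
  let ?cc = "if s then iter_vd 1 g (snd (snd q)) else iter_vd 1 f (fst (snd q))"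
  have cs: "?ca + ?cc = cc f g q" unfolding cc_def by simp
  have LA: "Lop f g (D (AD s) (?F a b)) q = ?ca * D (AD s) (?F a b) q" for a b
  proof (cases s)
    case True then show ?thesis
      using Lop_commute[OF S q Fs sf sg s2 Z] unfolding AD_def if_P[OF True] by simp
  next
    case False then show ?thesis
      using Lop_commute[OF S q Fs sf sg s2 Z] unfolding AD_def if_not_P[OF False] by simp
  qed
  have LC: "Lop f g (D (CD s) (?F a b)) q = ?cc * D (CD s) (?F a b) q" for a b
  proof (cases s)
    case True then show ?thesis
      using Lop_commute[OF S q Fs sf sg s2 Z] unfolding CD_def if_P[OF True] by simp
  next
    case False then show ?thesis
      using Lop_commute[OF S q Fs sf sg s2 Z] unfolding CD_def if_not_P[OF False] by simp
  qed
  have dF: "?F a b differentiable (at q)" for a b using Sm_diff[OF Fs q(1)] .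
  have dD: "D v (?F a b) differentiable (at q)" for a b v using Sm_diff[OF Sm_D[OF Fs] q(1)] .
  have dX: "?X i b differentiable (at q)" for i b using Sm_diff[OF XS q(1)] .
  have LX: "Lop f g (?X i b) q = ?ca * ?X i b q" for i b
  proof -
    have "Lop f g (?X i b) q = (\<Sum>a\<in>UNIV. Lop f g (\<lambda>q. D (AD s) (?F i a) q * ?F a b q) q)"
      by (rule Lop_sum) (auto intro: differentiable_mult dF dD)
    also have "\<dots> = (\<Sum>a\<in>UNIV. ?ca * (D (AD s) (?F i a) q * ?F a b q))"
      by (rule sum.cong) (simp_all add: Lop_mult[OF dD dF] LA Z q)
    also have "\<dots> = ?ca * ?X i b q" by (simp add: sum_distrib_left)
    finally show ?thesis .
  qed
  have LN: "Lop f g (NN \<theta> f g s m i j) q = cc f g q * NN \<theta> f g s m i j q" for i j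
  proof -
    have "Lop f g (NN \<theta> f g s m i j) q = (\<Sum>b\<in>UNIV. Lop f g (\<lambda>q. ?X i b q * ?Y b j q) q)"
      unfolding NNe by (rule Lop_sum) (auto intro: differentiable_mult dX dD)
    also have "\<dots> = (\<Sum>b\<in>UNIV. cc f g q * (?X i b q * ?Y b j q))"
      by (rule sum.cong) (simp_all add: Lop_mult[OF dX dD] LX LC flip: cs, simp add: algebra_simps)
    also have "\<dots> = cc f g q * NN \<theta> f g s m i j q" by (simp add: sum_distrib_left NNe)
    finally show ?thesis .
  qed
  then show "Lop f g (NN \<theta> f g s m i j) q = cc f g q * NN \<theta> f g s m i j q" .
  have "Lop f g (TT \<theta> f g s m) q = (\<Sum>i\<in>UNIV. Lop f g (NN \<theta> f g s m i i) q)"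
    unfolding TTe by (rule Lop_sum) (auto intro: Sm_diff[OF NS q(1)])
  also have "\<dots> = cc f g q * TT \<theta> f g s m q" by (simp add: LN sum_distrib_left TT_def)
  finally show "Lop f g (TT \<theta> f g s m) q = cc f g q * TT \<theta> f g s m q" .
qed

lemma Pe0: "Pe \<theta> f g 0 = (\<lambda>x. Emat - cscale \<i> (\<theta> x))"
  unfolding Pe_def by simp

lemma base:
  fixes \<theta> :: "real \<times> real \<Rightarrow> 'n::finite cmat"
  assumes s2: "smooth2 \<theta>" and sf: "smooth1 f" and sg: "smooth1 g"
  shows "Sm UNIV (Fe \<theta> f g s 0 i j)"
    and "fst q = 0 \<Longrightarrow> Lop f g (Fe \<theta> f g s 0 i j) q = 0"
proof -
  define Th where "Th = (\<lambda>bs (p::pt). iter_pd bs \<theta> (snd p) $ i $ j)"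
  define fx where "fx = (\<lambda>p::pt. iter_vd 0 f (fst (snd p)))"
  define gx where "gx = (\<lambda>p::pt. iter_vd 0 g (snd (snd p)))"
  define ep where "ep = (\<lambda>p::pt. complex_of_real (fst p))"
  define W where "W = (\<lambda>p. fx p * Th [True] p + gx p * Th [False] p)"
  define c where "c = (Emat :: 'n cmat) $ i $ j"
  have ThS: "Sm UNIV (Th bs)" for bs unfolding Th_def by (rule Gen_Sm[OF s2 sf sg Gen_T])
  have fxS: "Sm UNIV fx" unfolding fx_def by (rule Gen_Sm[OF s2 sf sg Gen_f])
  have gxS: "Sm UNIV gx" unfolding gx_def by (rule Gen_Sm[OF s2 sf sg Gen_g])
  have epS: "Sm UNIV ep" unfolding ep_def by (rule Gen_Sm[OF s2 sf sg Gen_e])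
  have WS: "Sm UNIV W" unfolding W_def by (intro Sm_add Sm_mult ThS fxS gxS open_UNIV)
  have Fe0: "Fe \<theta> f g s 0 i j = (\<lambda>p. c - \<i> * (Th [] p + ep p * W p))"
    by (rule ext) (simp add: Fe_def Pe_def Th_def ep_def W_def fx_def gx_def c_def iter_vd_0,
        simp add: scaleR_conv_of_real)
  have InS: "Sm UNIV (\<lambda>p. Th [] p + ep p * W p)" by (intro Sm_add Sm_mult ThS epS WS open_UNIV)
  show "Sm UNIV (Fe \<theta> f g s 0 i j)" unfolding Fe0
    by (intro Sm_diff2 Sm_mult Sm_const InS open_UNIV)
  assume q0: "fst q = 0"
  have dTh: "Th bs differentiable (at q)" for bs using Sm_diff[OF ThS] by simp
  have dep: "ep differentiable (at q)" using Sm_diff[OF epS] by simp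
  have dW: "W differentiable (at q)" using Sm_diff[OF WS] by simp
  have dI: "(\<lambda>p. Th [] p + ep p * W p) differentiable (at q)" using Sm_diff[OF InS] by simp
  have dIm: "(\<lambda>p. \<i> * (Th [] p + ep p * W p)) differentiable (at q)"
    by (rule Sm_diff[OF Sm_mult[OF open_UNIV Sm_const InS]]) simp
  have DTh: "D v (Th []) q = of_real (fst (snd v)) * Th [True] q + of_real (snd (snd v)) * Th [False] q" for v
    unfolding Th_def by (rule D_hd[OF hd_Th[OF s2]])
  have Dep: "D v ep q = of_real (fst v)" for v unfolding ep_def by (rule D_hd[OF hd_eps])
  have Dv: "D v (Fe \<theta> f g s 0 i j) q = - (\<i> * (of_real (fst (snd v)) * Th [True] q
      + of_real (snd (snd v)) * Th [False] q + of_real (fst v) * W q))" for v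
  proof -
    have "D v (Fe \<theta> f g s 0 i j) q = D v (\<lambda>p. c) q - D v (\<lambda>p. \<i> * (Th [] p + ep p * W p)) q"
      unfolding Fe0 by (rule D_diff[OF differentiable_const dIm])
    also have "D v (\<lambda>p. \<i> * (Th [] p + ep p * W p)) q = \<i> * D v (\<lambda>p. Th [] p + ep p * W p) q"
      using D_mult[OF differentiable_const[where a="\<i>"] dI, where v=v] by simp
    also have "D v (\<lambda>p. Th [] p + ep p * W p) q = D v (Th []) q + D v (\<lambda>p. ep p * W p) q"
      by (rule D_add[OF dTh differentiable_mult[OF dep dW]])
    also have "D v (\<lambda>p. ep p * W p) q = ep q * D v W q + D v ep q * W q"
      by (rule D_mult[OF dep dW])
    moreover have "ep q = 0" using q0 by (simp add: ep_def)
    ultimately show ?thesis by (simp add: DTh Dep algebra_simps)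
  qed
  show "Lop f g (Fe \<theta> f g s 0 i j) q = 0"
    unfolding Lop_def Dv by (simp add: e0_def e1_def e2_def W_def fx_def gx_def iter_vd_0 algebra_simps)
qed

lemma main_ind:
  fixes \<theta> :: "real \<times> real \<Rightarrow> 'n::finite cmat"
  assumes s2: "smooth2 \<theta>" and sf: "smooth1 f" and sg: "smooth1 g"
    and den: "\<forall>m<k. denom s ((Pi_op s ^^ m) (\<lambda>x. Emat - cscale \<i> (\<theta> x))) x0 \<noteq> 0"
  shows "m \<le> k \<Longrightarrow> \<exists>S. open S \<and> (0, x0) \<in> S \<and> (\<forall>i j. Sm S (Fe \<theta> f g s m i j))
      \<and> (\<forall>i j. \<forall>q\<in>S. fst q = 0 \<longrightarrow> Lop f g (Fe \<theta> f g s m i j) q = 0)"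
proof (induction m)
  case 0
  show ?case
    by (intro exI[of _ UNIV] conjI allI ballI impI base[OF s2 sf sg]) auto
next
  case (Suc m)
  then obtain S where S: "open S" "(0, x0) \<in> S" and Fs: "\<And>i j. Sm S (Fe \<theta> f g s m i j)"
    and Z: "\<And>i j. \<forall>q\<in>S. fst q = 0 \<longrightarrow> Lop f g (Fe \<theta> f g s m i j) q = 0" by auto
  let ?T = "TT \<theta> f g s m"
  let ?N = "NN \<theta> f g s m"
  have TS: "Sm S ?T" and NS: "\<And>i j. Sm S (?N i j)"
    using step_bc[OF s2 sf sg S(1) Fs Z] by auto
  have dF: "\<And>i j. Fe \<theta> f g s m i j differentiable (at p)" if "p \<in> S" for p
    using Sm_diff[OF Fs that] .
  have "?T (0, x0) = denom s ((Pi_op s ^^ m) (Pe \<theta> f g 0)) x0"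
    using step_a(2)[OF dF[OF S(2)]] by simp
  then have T0: "?T (0, x0) \<noteq> 0" using den Suc.prems unfolding Pe0 by auto
  define S' where "S' = S \<inter> ?T -` (-{0})"
  have "continuous_on S ?T"
    by (intro continuous_at_imp_continuous_on ballI differentiable_imp_continuous_within Sm_diff[OF TS])
  then have oS': "open S'" unfolding S'_def by (rule continuous_open_preimage) (use S in auto)
  have S'S: "S' \<subseteq> S" unfolding S'_def by auto
  have S'0: "(0, x0) \<in> S'" unfolding S'_def using S T0 by auto
  have Tnz: "\<And>p. p \<in> S' \<Longrightarrow> ?T p \<noteq> 0" unfolding S'_def by auto
  have eq: "\<forall>p\<in>S'. Fe \<theta> f g s (Suc m) i j p = inverse (?T p) * ?N i j p" for i j
    using step_a(1)[OF dF] S'S by auto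
  have RS: "Sm S' (\<lambda>p. inverse (?T p) * ?N i j p)" for i j
    by (intro Sm_mult Sm_inv oS' Sm_mono[OF TS S'S] Sm_mono[OF NS S'S] ballI Tnz)
  have FS': "Sm S' (Fe \<theta> f g s (Suc m) i j)" for i j
    by (rule Sm_cong[OF oS' RS eq])
  have L: "Lop f g (Fe \<theta> f g s (Suc m) i j) q = 0" if q: "q \<in> S'" "fst q = 0" for i j q
  proof -
    have qS: "q \<in> S" using q S'S by auto
    have dT: "?T differentiable (at q)" using Sm_diff[OF TS qS] .
    have dN: "?N i j differentiable (at q)" using Sm_diff[OF NS qS] .
    have dIT: "(\<lambda>p. inverse (?T p)) differentiable (at q)"
      using Sm_diff[OF Sm_inv[OF oS' Sm_mono[OF TS S'S]] q(1)] Tnz by auto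
    have "Lop f g (Fe \<theta> f g s (Suc m) i j) q = Lop f g (\<lambda>p. inverse (?T p) * ?N i j p) q"
      by (rule Lop_cong[OF oS' q(1) eq]) (rule differentiable_mult[OF dIT dN])
    also have "\<dots> = Lop f g (\<lambda>p. inverse (?T p)) q * ?N i j q + inverse (?T q) * Lop f g (?N i j) q"
      by (rule Lop_mult[OF dIT dN])
    also have "Lop f g (\<lambda>p. inverse (?T p)) q = - (inverse (?T q) * Lop f g ?T q * inverse (?T q))"
      by (rule Lop_inv[OF dT Tnz[OF q(1)]])
    also have "Lop f g ?T q = cc f g q * ?T q" using step_bc(4)[OF s2 sf sg S(1) Fs Z qS q(2)] .
    also have "Lop f g (?N i j) q = cc f g q * ?N i j q" using step_bc(3)[OF s2 sf sg S(1) Fs Z qS q(2)] .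
    finally show ?thesis using Tnz[OF q(1)] by (simp add: field_simps)
  qed
  show ?case using oS' S'0 FS' L by blast
qed

theorem proposition7:
  fixes \<theta> :: "real \<times> real \<Rightarrow> 'n::finite cmat"
    and f g :: "real \<Rightarrow> complex"
    and s :: bool and k :: nat and x0 :: "real \<times> real"
  assumes "smooth2 \<theta>" and "\<forall>x. \<theta> x \<in> su"
    and "smooth1 f" and "smooth1 g"
    and "\<forall>m<k. denom s ((Pi_op s ^^ m) (\<lambda>x. Emat - cscale \<i> (\<theta> x))) x0 \<noteq> 0"
  shows "((\<lambda>\<epsilon>::real. ((Pi_op s ^^ k)
             (\<lambda>x. Emat - cscale \<i> (\<theta> x + \<epsilon> *\<^sub>R
                  (cscale (f (fst x)) (pd1 \<theta> x) + cscale (g (snd x)) (pd2 \<theta> x))))) x0)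
         has_vector_derivative
           (cscale (f (fst x0)) (pd1 ((Pi_op s ^^ k) (\<lambda>x. Emat - cscale \<i> (\<theta> x))) x0)
          + cscale (g (snd x0)) (pd2 ((Pi_op s ^^ k) (\<lambda>x. Emat - cscale \<i> (\<theta> x))) x0)))
         (at 0)"
proof -
  obtain S where S: "open S" "(0, x0) \<in> S" and Fs: "\<And>i j. Sm S (Fe \<theta> f g s k i j)"
    and Z: "\<And>i j. \<forall>q\<in>S. fst q = 0 \<longrightarrow> Lop f g (Fe \<theta> f g s k i j) q = 0"
    using main_ind[OF assms(1,3,4,5) order_refl] by blast
  let ?p = "(0::real, x0)"
  let ?Q = "\<lambda>\<epsilon>. (Pi_op s ^^ k) (Pe \<theta> f g \<epsilon>)"
  have dF: "\<And>i j. Fe \<theta> f g s k i j differentiable (at ?p)" using Sm_diff[OF Fs S(2)] .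
  have fe': "(\<lambda>p. ?Q (fst p) (snd p) $ a $ b) = Fe \<theta> f g s k a b" for a b
    by (rule ext) (simp add: Fe_def)
  have d: "\<And>i j. (\<lambda>p. ?Q (fst p) (snd p) $ i $ j) differentiable (at ?p)"
    unfolding fe' by (rule dF)
  note r = R1[of ?Q, OF d, unfolded fe']
  have r1: "pd1 ((Pi_op s ^^ k) (\<lambda>x. Emat - cscale \<i> (\<theta> x))) x0 = (\<chi> i j. D e1 (Fe \<theta> f g s k i j) ?p)"
    using r(1) by (simp add: Pe0)
  have r2: "pd2 ((Pi_op s ^^ k) (\<lambda>x. Emat - cscale \<i> (\<theta> x))) x0 = (\<chi> i j. D e2 (Fe \<theta> f g s k i j) ?p)"
    using r(2) by (simp add: Pe0)
  have ent: "((\<lambda>\<epsilon>. ?Q \<epsilon> x0 $ i $ j) has_vector_derivative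
      f (fst x0) * D e1 (Fe \<theta> f g s k i j) ?p + g (snd x0) * D e2 (Fe \<theta> f g s k i j) ?p) (at 0)" for i j
  proof -
    have "((\<lambda>t. Fe \<theta> f g s k i j (?p + t *\<^sub>R e0)) has_vector_derivative D e0 (Fe \<theta> f g s k i j) (?p + 0 *\<^sub>R e0)) (at 0)"
      by (rule line_hvd) (simp add: dF)
    moreover have "(\<lambda>t. Fe \<theta> f g s k i j (?p + t *\<^sub>R e0)) = (\<lambda>\<epsilon>. ?Q \<epsilon> x0 $ i $ j)"
      by (rule ext) (simp add: Fe_def e0_def zero_prod_def[symmetric])
    moreover have "D e0 (Fe \<theta> f g s k i j) ?p = f (fst x0) * D e1 (Fe \<theta> f g s k i j) ?p + g (snd x0) * D e2 (Fe \<theta> f g s k i j) ?p"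
    proof -
      have "Lop f g (Fe \<theta> f g s k i j) ?p = 0" using Z[of i j] S(2) by auto
      then show ?thesis unfolding Lop_def by (simp add: algebra_simps)
    qed
    ultimately show ?thesis by simp
  qed
  have "((\<lambda>\<epsilon>. ?Q \<epsilon> x0) has_vector_derivative
     (cscale (f (fst x0)) (pd1 ((Pi_op s ^^ k) (\<lambda>x. Emat - cscale \<i> (\<theta> x))) x0)
          + cscale (g (snd x0)) (pd2 ((Pi_op s ^^ k) (\<lambda>x. Emat - cscale \<i> (\<theta> x))) x0))) (at 0)"
    unfolding r1 r2 by (intro vec_hvd) (simp add: ent)
  then show ?thesis unfolding Pe_def .
qed

end
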